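(* Let $f\in C^2(\mathbb R)$ and let $u:[0,\infty)\times\mathbb R\to\mathbb R$ be bounded and continuous. Then there exists a Lagrangian parameterization $\chi$ associated with $u$. Consequently, every continuous broad solution with source $\mathfrak g$ is a continuous Lagrangian solution (with respect to any Lagrangian parameterization) with the same source $\mathfrak g$.
   Context: $\lambda(t,x):=f'(u(t,x))$. A characteristic curve of $u$ is an absolutely continuous function $\gamma$ on an interval of $[0,\infty)$ with $\dot\gamma(t)=\lambda(t,\gamma(t))$ for a.e. $t$. A Lagrangian parameterization associated with $u$ is a continuous surjective map $\chi:[0,\infty)\times\mathbb R\to\mathbb R$ such that for every $y$, $t\mapsto\chi(t,y)$ is a characteristic curve defined on $[0,\infty)$, and for every $t$, $y\mapsto\chi(t,y)$ is nondecreasing. $u$ is a continuous broad solution with source $\mathfrak g$ (bounded Borel) if $\frac{d}{dt}u(t,\gamma(t))=\mathfrak g(t,\gamma(t))$ in the sense of distributions for every characteristic curve $\gamma$; it is a continuous Lagrangian solution with parameterization $\chi$ and source $\mathfrak g$ if $\frac{d}{dt}u(t,\chi(t,y))=\mathfrak g(t,\chi(t,y))$ in $\mathcal D'((0,\infty))$ for every $y$. *)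

theory Defs
  imports "HOL-Analysis.Analysis"
begin

definition C2 :: "(real \<Rightarrow> real) \<Rightarrow> bool" where
  "C2 f \<longleftrightarrow> (\<forall>x. f differentiable (at x)) \<and> (\<forall>x. deriv f differentiable (at x))
            \<and> continuous_on UNIV (deriv (deriv f))"

definition abs_cont_on :: "real set \<Rightarrow> (real \<Rightarrow> real) \<Rightarrow> bool" where
  "abs_cont_on I g \<longleftrightarrow>
     (\<forall>e>0. \<exists>d>0. \<forall>S. finite S \<and> (\<forall>(a,b)\<in>S. a \<le> b \<and> {a..b} \<subseteq> I)
        \<and> pairwise (\<lambda>p q. {fst p<..<snd p} \<inter> {fst q<..<snd q} = {}) S
        \<and> (\<Sum>(a,b)\<in>S. b - a) < d \<longrightarrow> (\<Sum>(a,b)\<in>S. \<bar>g b - g a\<bar>) < e)"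

definition loc_abs_cont_on :: "real set \<Rightarrow> (real \<Rightarrow> real) \<Rightarrow> bool" where
  "loc_abs_cont_on I g \<longleftrightarrow> (\<forall>a b. {a..b} \<subseteq> I \<longrightarrow> abs_cont_on {a..b} g)"

definition char_speed :: "(real \<Rightarrow> real) \<Rightarrow> (real \<times> real \<Rightarrow> real) \<Rightarrow> real \<Rightarrow> real \<Rightarrow> real" where
  "char_speed f u t x = deriv f (u (t, x))"

definition char_curve :: "(real \<Rightarrow> real) \<Rightarrow> (real \<times> real \<Rightarrow> real) \<Rightarrow> real set \<Rightarrow> (real \<Rightarrow> real) \<Rightarrow> bool" where
  "char_curve f u I \<gamma> \<longleftrightarrow> is_interval I \<and> I \<subseteq> {0..} \<and> loc_abs_cont_on I \<gamma>
     \<and> (AE t in lborel. t \<in> I \<longrightarrow> (\<gamma> has_real_derivative char_speed f u t (\<gamma> t)) (at t))"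

definition lagrangian_param :: "(real \<Rightarrow> real) \<Rightarrow> (real \<times> real \<Rightarrow> real) \<Rightarrow> (real \<times> real \<Rightarrow> real) \<Rightarrow> bool" where
  "lagrangian_param f u X \<longleftrightarrow> continuous_on ({0..} \<times> UNIV) X
     \<and> X ` ({0..} \<times> UNIV) = UNIV
     \<and> (\<forall>y. char_curve f u {0..} (\<lambda>t. X (t, y)))
     \<and> (\<forall>t\<ge>0. mono (\<lambda>y. X (t, y)))"

definition test_fun :: "real set \<Rightarrow> (real \<Rightarrow> real) \<Rightarrow> bool" where
  "test_fun U \<phi> \<longleftrightarrow> (\<forall>k x. ((deriv ^^ k) \<phi>) differentiable (at x))
     \<and> compact (closure {x. \<phi> x \<noteq> 0}) \<and> closure {x. \<phi> x \<noteq> 0} \<subseteq> U"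

definition distr_deriv_eq :: "real set \<Rightarrow> (real \<Rightarrow> real) \<Rightarrow> (real \<Rightarrow> real) \<Rightarrow> bool" where
  "distr_deriv_eq U v w \<longleftrightarrow> (\<forall>\<phi>. test_fun U \<phi> \<longrightarrow>
     (LINT t|lborel. v t * deriv \<phi> t) = - (LINT t|lborel. w t * \<phi> t))"

definition broad_solution :: "(real \<Rightarrow> real) \<Rightarrow> (real \<times> real \<Rightarrow> real) \<Rightarrow> (real \<times> real \<Rightarrow> real) \<Rightarrow> bool" where
  "broad_solution f u g \<longleftrightarrow> continuous_on ({0..} \<times> UNIV) u \<and>
     (\<forall>I \<gamma>. char_curve f u I \<gamma> \<longrightarrow>
        distr_deriv_eq (interior I) (\<lambda>t. u (t, \<gamma> t)) (\<lambda>t. g (t, \<gamma> t)))"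

definition lagrangian_solution :: "(real \<Rightarrow> real) \<Rightarrow> (real \<times> real \<Rightarrow> real) \<Rightarrow> (real \<times> real \<Rightarrow> real) \<Rightarrow> (real \<times> real \<Rightarrow> real) \<Rightarrow> bool" where
  "lagrangian_solution f u X g \<longleftrightarrow> continuous_on ({0..} \<times> UNIV) u \<and> lagrangian_param f u X \<and>
     (\<forall>y. distr_deriv_eq {0<..} (\<lambda>t. u (t, X (t, y))) (\<lambda>t. g (t, X (t, y))))"

end

theory Submission
  imports Defs "HOL-Complex_Analysis.Great_Picard"
begin


locale charsetting =
  fixes lam :: "real \<Rightarrow> real \<Rightarrow> real" and M :: real
  assumes M1: "M \<ge> 1"
    and lamb: "\<And>t z. t \<ge> 0 \<Longrightarrow> \<bar>lam t z\<bar> \<le> M"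
    and lamc: "continuous_on ({0..} \<times> UNIV) (\<lambda>p. lam (fst p) (snd p))"
begin

definition hh :: "nat \<Rightarrow> real" where "hh n = 1 / (real n + 1)"

lemma hh_pos: "hh n > 0" by (simp add: hh_def)
lemma hh_le1: "hh n \<le> 1" by (simp add: hh_def)
lemma absdiv_nonneg: "0 \<le> \<bar>a\<bar> / hh n" using hh_pos[of n] by simp
lemma khh_nonneg: "0 \<le> real k * hh n" using hh_pos[of n] by simp

definition lt :: "nat \<Rightarrow> nat \<Rightarrow> real \<Rightarrow> real" where
  "lt n k x = Inf (range (\<lambda>z. lam (real k * hh n) z + \<bar>x - z\<bar> / hh n))"

lemma lt_bdd: "bdd_below (range (\<lambda>z. lam (real k * hh n) z + \<bar>x - z\<bar> / hh n))"
proof -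
  have "- M \<le> lam (real k * hh n) z + \<bar>x - z\<bar> / hh n" for z
    using lamb[OF khh_nonneg, of k n z] absdiv_nonneg[of "x-z" n] by (simp add: abs_le_iff)
  then show ?thesis by (meson bdd_belowI2)
qed

lemma lt_le: "lt n k x \<le> lam (real k * hh n) z + \<bar>x - z\<bar> / hh n"
  unfolding lt_def by (rule cInf_lower[OF _ lt_bdd]) auto

lemma lt_le_lam: "lt n k x \<le> lam (real k * hh n) x"
  using lt_le[of n k x x] by simp

lemma lt_ge: assumes "\<And>z. c \<le> lam (real k * hh n) z + \<bar>x - z\<bar> / hh n" shows "c \<le> lt n k x"
  unfolding lt_def by (rule cInf_greatest) (use assms in auto)

lemma lt_bound: "\<bar>lt n k x\<bar> \<le> M"
proof -
  have "-M \<le> lt n k x"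
    by (rule lt_ge) (use lamb[OF khh_nonneg, of k n] absdiv_nonneg[of _ n] in \<open>smt (verit)\<close>)
  moreover have "lt n k x \<le> M" using lt_le_lam[of n k x] lamb[OF khh_nonneg, of k n x]
    by (simp add: abs_le_iff)
  ultimately show ?thesis by simp
qed

lemma lt_lower:
  assumes "c \<le> M" and "\<And>z. \<bar>z - x\<bar> \<le> 2 * M * hh n \<Longrightarrow> c \<le> lam (real k * hh n) z"
  shows "c \<le> lt n k x"
proof (rule lt_ge)
  fix z
  show "c \<le> lam (real k * hh n) z + \<bar>x - z\<bar> / hh n"
  proof (cases "\<bar>z - x\<bar> \<le> 2 * M * hh n")
    case True then show ?thesis using assms(2)[of z] absdiv_nonneg[of "x-z" n] by simp
  next
    case False
    then have "\<bar>x - z\<bar> / hh n \<ge> 2 * M" using hh_pos[of n]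
      by (simp add: le_divide_eq abs_minus_commute mult.commute mult.left_commute)
    moreover have "lam (real k * hh n) z \<ge> -M" using lamb[OF khh_nonneg, of k n z]
      by (simp add: abs_le_iff)
    ultimately show ?thesis using assms(1) by linarith
  qed
qed

lemma lt_lip: "lt n k x \<le> lt n k x' + \<bar>x - x'\<bar> / hh n"
proof -
  have "lt n k x - \<bar>x - x'\<bar> / hh n \<le> lt n k x'"
  proof (rule lt_ge)
    fix z
    have "lt n k x \<le> lam (real k * hh n) z + \<bar>x - z\<bar> / hh n" by (rule lt_le)
    moreover have "\<bar>x - z\<bar> / hh n \<le> \<bar>x - x'\<bar> / hh n + \<bar>x' - z\<bar> / hh n"
      using hh_pos[of n] by (simp add: add_divide_distrib[symmetric] divide_right_mono)
    ultimately show "lt n k x - \<bar>x - x'\<bar> / hh n \<le> lam (real k * hh n) z + \<bar>x' - z\<bar> / hh n"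
      by linarith
  qed
  then show ?thesis by simp
qed

lemma lt_lip2: "hh n * lt n k x \<le> hh n * lt n k x' + \<bar>x - x'\<bar>"
    using mult_left_mono[OF lt_lip[of n k x x'], of "hh n"] hh_pos[of n] by (simp add: distrib_left)

lemma step_mono: assumes "x \<le> x'" shows "x + hh n * lt n k x \<le> x' + hh n * lt n k x'"
  using lt_lip2[of n k x x'] assms by simp

lemma step_lip: "\<bar>(x + hh n * lt n k x) - (x' + hh n * lt n k x')\<bar> \<le> 2 * \<bar>x - x'\<bar>"
proof -
  have a: "hh n * lt n k x \<le> hh n * lt n k x' + \<bar>x - x'\<bar>"
    using mult_left_mono[OF lt_lip[of n k x x'], of "hh n"] hh_pos[of n] by (simp add: distrib_left)
  have b: "hh n * lt n k x' \<le> hh n * lt n k x + \<bar>x - x'\<bar>"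
    using mult_left_mono[OF lt_lip[of n k x' x], of "hh n"] hh_pos[of n] by (simp add: distrib_left abs_minus_commute)
  show ?thesis using a b abs_ge_self[of "x-x'"] abs_ge_minus_self[of "x-x'"] by (simp add: abs_le_iff)
qed


primrec P :: "nat \<Rightarrow> real \<Rightarrow> nat \<Rightarrow> real" where
  "P n y 0 = y"
| "P n y (Suc k) = P n y k + hh n * lt n k (P n y k)"

definition vv :: "nat \<Rightarrow> real \<Rightarrow> nat \<Rightarrow> real" where
  "vv n y k = lt n k (P n y k)"

definition X :: "nat \<Rightarrow> real \<Rightarrow> real \<Rightarrow> real" where
  "X n t y = P n y (nat \<lfloor>t / hh n\<rfloor>) + (t - real (nat \<lfloor>t / hh n\<rfloor>) * hh n) * vv n y (nat \<lfloor>t / hh n\<rfloor>)"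

lemma P_Suc': "P n y (Suc k) = P n y k + hh n * vv n y k" by (simp add: vv_def)

lemma vv_bound: "\<bar>vv n y k\<bar> \<le> M" by (simp add: vv_def lt_bound)

lemma P_mono: "y \<le> y' \<Longrightarrow> P n y k \<le> P n y' k"
  by (induction k) (auto intro: step_mono)

lemma step_cont: "continuous_on UNIV (\<lambda>x. x + hh n * lt n k x)"
proof -
  have "2-lipschitz_on UNIV (\<lambda>x. x + hh n * lt n k x)"
    by (rule lipschitz_onI) (use step_lip in \<open>auto simp: dist_real_def\<close>)
  then show ?thesis by (rule lipschitz_on_continuous_on)
qed

lemma P_cont: "continuous_on UNIV (\<lambda>y. P n y k)"
proof (induction k)
  case 0 then show ?case by simp
next
  case (Suc k)
  have "continuous_on UNIV ((\<lambda>x. x + hh n * lt n k x) \<circ> (\<lambda>y. P n y k))"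
    by (rule continuous_on_compose[OF Suc]) (rule continuous_on_subset[OF step_cont], simp)
  then show ?case by (simp add: o_def)
qed

lemma floor_grid: "nat \<lfloor>(real k * hh n) / hh n\<rfloor> = k"
  using hh_pos[of n] by simp

lemma X_grid: "X n (real k * hh n) y = P n y k"
  unfolding X_def floor_grid by simp

lemma X_cell:
  assumes "real k * hh n \<le> t" "t \<le> (real k + 1) * hh n"
  shows "X n t y = P n y k + (t - real k * hh n) * vv n y k"
proof (cases "t < (real k + 1) * hh n")
  case True
  have "real k \<le> t / hh n" using assms(1) hh_pos[of n] by (simp add: le_divide_eq)
  moreover have "t / hh n < real k + 1" using True hh_pos[of n] by (simp add: divide_less_eq)
  ultimately have "\<lfloor>t / hh n\<rfloor> = int k" by (simp add: floor_eq_iff)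
  then have "nat \<lfloor>t / hh n\<rfloor> = k" by simp
  then show ?thesis unfolding X_def by simp
next
  case False
  then have t: "t = real (Suc k) * hh n" using assms(2) by simp
  show ?thesis unfolding t X_grid P_Suc' by (simp add: algebra_simps)
qed

lemma X_cell_of:
  assumes "0 \<le> t"
  obtains k where "real k * hh n \<le> t" "t < (real k + 1) * hh n"
proof -
  define k where "k = nat \<lfloor>t / hh n\<rfloor>"
  have "real k = of_int \<lfloor>t / hh n\<rfloor>" using assms hh_pos[of n] by (simp add: k_def)
  then have "real k \<le> t / hh n" "t / hh n < real k + 1" by linarith+
  then show ?thesis using that[of k] hh_pos[of n] by (simp add: le_divide_eq divide_less_eq)
qed

lemma X_mono:
  assumes "0 \<le> t" "y \<le> y'"
  shows "X n t y \<le> X n t y'"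
proof -
  obtain k where k: "real k * hh n \<le> t" "t < (real k + 1) * hh n" using X_cell_of[OF assms(1)] by blast
  define th where "th = (t - real k * hh n) / hh n"
  have th: "0 \<le> th" "th \<le> 1" using k hh_pos[of n] by (auto simp: th_def divide_simps algebra_simps)
  have eq: "X n t z = (1 - th) * P n z k + th * P n z (Suc k)" for z
  proof -
    have "X n t z = P n z k + (t - real k * hh n) * vv n z k" using X_cell[of k n t] k by simp
    also have "\<dots> = (1 - th) * P n z k + th * P n z (Suc k)"
      unfolding P_Suc' th_def using hh_pos[of n] by (simp add: field_simps)
    finally show ?thesis .
  qed
  show ?thesis unfolding eq using th P_mono[OF assms(2), of n k] P_mono[OF assms(2), of n "Suc k"]
    by (intro add_mono mult_left_mono) auto
qed


lemma wsum_bounds: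
  fixes c v :: "nat \<Rightarrow> real"
  assumes "finite I" "\<And>j. j \<in> I \<Longrightarrow> 0 \<le> c j"
    "\<And>j. j \<in> I \<Longrightarrow> c j \<noteq> 0 \<Longrightarrow> A \<le> v j \<and> v j \<le> B"
  shows "A * sum c I \<le> (\<Sum>j\<in>I. c j * v j) \<and> (\<Sum>j\<in>I. c j * v j) \<le> B * sum c I"
proof -
  have 1: "A * c j \<le> c j * v j" if "j \<in> I" for j
    using assms(2,3)[OF that] by (cases "c j = 0") (auto simp: mult.commute intro: mult_left_mono)
  have 2: "c j * v j \<le> B * c j" if "j \<in> I" for j
    using assms(2,3)[OF that] by (cases "c j = 0") (auto simp: mult.commute intro: mult_left_mono)
  show ?thesis using sum_mono[of I, OF 1] sum_mono[of I, OF 2]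
    by (simp add: sum_distrib_left)
qed

definition len :: "nat \<Rightarrow> nat \<Rightarrow> real \<Rightarrow> real" where
  "len n j t = max 0 (min (hh n) (t - real j * hh n))"

lemma P_sum: "P n y k = y + (\<Sum>j<k. hh n * vv n y j)"
  by (induction k) (simp_all del: P.simps(2) add: P_Suc')

lemma len_sum: "0 \<le> t \<Longrightarrow> (\<Sum>j<K. len n j t) = min t (real K * hh n)"
proof (induction K)
  case 0 then show ?case by simp
next
  case (Suc K)
  then show ?case using hh_pos[of n] by (simp add: len_def algebra_simps max_def min_def)
qed

lemma len_mono: "t \<le> t' \<Longrightarrow> len n j t \<le> len n j t'"
  unfolding len_def by (simp add: max_def min_def)

lemma len_diff_nz: "len n j t' - len n j t \<noteq> 0 \<Longrightarrow> t \<le> t' \<Longrightarrow> real j * hh n < t' \<and> t < (real j + 1) * hh n"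
  unfolding len_def by (auto simp: max_def min_def algebra_simps split: if_splits)

lemma X_sum:
  assumes "0 \<le> t" "t < real K * hh n"
  shows "X n t y = y + (\<Sum>j<K. len n j t * vv n y j)"
proof -
  obtain k where k: "real k * hh n \<le> t" "t < (real k + 1) * hh n" using X_cell_of[OF assms(1)] by blast
  have "real k * hh n < real K * hh n" using k assms by simp
  then have kK: "Suc k \<le> K" using hh_pos[of n] by simp
  have "(\<Sum>j<K. len n j t * vv n y j) = (\<Sum>j<Suc k. len n j t * vv n y j)"
  proof (rule sum.mono_neutral_right)
    show "\<forall>j\<in>{..<K} - {..<Suc k}. len n j t * vv n y j = 0"
    proof
      fix j assume "j \<in> {..<K} - {..<Suc k}"
      then have "real (Suc k) \<le> real j" by simp
      then have "(real k + 1) * hh n \<le> real j * hh n" using hh_pos[of n] by (simp add: mult_right_mono)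
      then show "len n j t * vv n y j = 0" using k by (simp add: len_def)
    qed
  qed (use kK in auto)
  also have "\<dots> = (\<Sum>j<k. hh n * vv n y j) + (t - real k * hh n) * vv n y k"
  proof -
    have "len n j t = hh n" if "j < k" for j
    proof -
      have "real j + 1 \<le> real k" using that by simp
      then have "(real j + 1) * hh n \<le> real k * hh n" using hh_pos[of n] by (simp add: mult_right_mono)
      then show ?thesis using k by (simp add: len_def algebra_simps)
    qed
    moreover have "len n k t = t - real k * hh n" using k by (simp add: len_def algebra_simps)
    ultimately show ?thesis by simp
  qed
  finally show ?thesis using X_cell[of k n t y] k by (simp add: P_sum)
qed

lemma X_diff_bounds:
  assumes "0 \<le> a" "a \<le> b"
    and "\<And>j. real j * hh n < b \<Longrightarrow> a < (real j + 1) * hh n \<Longrightarrow> A \<le> vv n y j \<and> vv n y j \<le> B"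
  shows "A * (b - a) \<le> X n b y - X n a y \<and> X n b y - X n a y \<le> B * (b - a)"
proof -
  obtain K :: nat where K: "b / hh n < real K" using reals_Archimedean2 by blast
  then have Kb: "b < real K * hh n" using hh_pos[of n] by (simp add: divide_less_eq)
  have "X n b y - X n a y = (\<Sum>j<K. (len n j b - len n j a) * vv n y j)"
    using X_sum[of b K n y] X_sum[of a K n y] assms Kb
    by (simp add: sum_subtractf[symmetric] left_diff_distrib)
  moreover have "(\<Sum>j<K. (len n j b - len n j a)) = b - a"
    using len_sum[of b n K] len_sum[of a n K] assms Kb by (simp add: sum_subtractf)
  moreover have "A * (\<Sum>j<K. (len n j b - len n j a)) \<le> (\<Sum>j<K. (len n j b - len n j a) * vv n y j) \<and>
      (\<Sum>j<K. (len n j b - len n j a) * vv n y j) \<le> B * (\<Sum>j<K. (len n j b - len n j a))"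
    by (rule wsum_bounds) (use len_mono[OF assms(2)] len_diff_nz assms(2,3) in auto)
  ultimately show ?thesis by simp
qed

lemma X_lip: assumes "0 \<le> t" "0 \<le> t'" shows "\<bar>X n t' y - X n t y\<bar> \<le> M * \<bar>t' - t\<bar>"
proof -
  have b: "-M \<le> vv n y j \<and> vv n y j \<le> M" for j using vv_bound[of n y j] by (simp add: abs_le_iff)
  show ?thesis
  proof (cases "t \<le> t'")
    case True
    then show ?thesis using X_diff_bounds[OF assms(1) True, where A="-M" and B=M and n=n and y=y] b by (simp add: abs_le_iff)
  next
    case False
    then show ?thesis using X_diff_bounds[OF assms(2), of t, where A="-M" and B=M and n=n and y=y] b by (simp add: abs_le_iff)
  qed
qed

lemma X0: "X n 0 y = y" using X_grid[of n 0 y] by simp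


lemma lam_unif:
  assumes "0 < e"
  obtains d where "0 < d" "\<And>t z t' z'. 0 \<le> t \<Longrightarrow> t \<le> T \<Longrightarrow> \<bar>z\<bar> \<le> R \<Longrightarrow>
      0 \<le> t' \<Longrightarrow> t' \<le> T \<Longrightarrow> \<bar>z'\<bar> \<le> R \<Longrightarrow> \<bar>t' - t\<bar> + \<bar>z' - z\<bar> < d \<Longrightarrow>
      \<bar>lam t' z' - lam t z\<bar> < e"
proof -
  let ?K = "{0..T} \<times> {-R..R}"
  have "continuous_on ?K (\<lambda>p. lam (fst p) (snd p))"
    by (rule continuous_on_subset[OF lamc]) auto
  then have "uniformly_continuous_on ?K (\<lambda>p. lam (fst p) (snd p))"
    by (intro compact_uniformly_continuous) (auto intro: compact_Times)
  then obtain d where d: "0 < d" "\<And>p q. p \<in> ?K \<Longrightarrow> q \<in> ?K \<Longrightarrow> dist q p < d \<Longrightarrow>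
      dist (lam (fst q) (snd q)) (lam (fst p) (snd p)) < e"
    unfolding uniformly_continuous_on_def using assms by metis
  show ?thesis
  proof (rule that[OF d(1)])
    fix t z t' z'
    assume a: "0 \<le> t" "t \<le> T" "\<bar>z\<bar> \<le> R" "0 \<le> t'" "t' \<le> T" "\<bar>z'\<bar> \<le> R" "\<bar>t' - t\<bar> + \<bar>z' - z\<bar> < d"
    have "dist (t', z') (t, z) \<le> \<bar>t' - t\<bar> + \<bar>z' - z\<bar>"
      unfolding dist_Pair_Pair dist_real_def using sqrt_sum_squares_le_sum_abs[of "t' - t" "z' - z"] by simp
    then show "\<bar>lam t' z' - lam t z\<bar> < e"
      using d(2)[of "(t,z)" "(t',z')"] a by (auto simp: dist_real_def abs_le_iff)
  qed
qed


lemma X_bound: "0 \<le> t \<Longrightarrow> \<bar>X n t y\<bar> \<le> \<bar>y\<bar> + M * t"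
  using X_lip[of 0 t n y] X0[of n y] by (simp add: abs_le_iff) linarith

lemma slope_est:
  assumes "0 < e"
  shows "\<exists>\<delta>>0. \<forall>n y t t'. hh n < \<delta> \<longrightarrow> \<bar>y\<bar> \<le> R \<longrightarrow> 0 \<le> t \<longrightarrow> t \<le> T \<longrightarrow> 0 \<le> t' \<longrightarrow> t' \<le> T
     \<longrightarrow> \<bar>t' - t\<bar> < \<delta> \<longrightarrow> \<bar>X n t' y - X n t y - (t' - t) * lam t (X n t y)\<bar> \<le> e * \<bar>t' - t\<bar>"
proof -
  define R1 where "R1 = \<bar>R\<bar> + M * \<bar>T\<bar> + 4 * M + 1"
  obtain d where d: "0 < d" "\<And>t z t' z'. 0 \<le> t \<Longrightarrow> t \<le> T + 1 \<Longrightarrow> \<bar>z\<bar> \<le> R1 \<Longrightarrow>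
      0 \<le> t' \<Longrightarrow> t' \<le> T + 1 \<Longrightarrow> \<bar>z'\<bar> \<le> R1 \<Longrightarrow> \<bar>t' - t\<bar> + \<bar>z' - z\<bar> < d \<Longrightarrow>
      \<bar>lam t' z' - lam t z\<bar> < e"
    using lam_unif[OF assms, of "T+1" R1] by metis
  define \<delta> where "\<delta> = min (1/2) (d / (4 * M + 2))"
  have M0: "0 < 4 * M + 2" using M1 by simp
  have \<delta>0: "0 < \<delta>" using d(1) M0 by (simp add: \<delta>_def)
  have \<delta>d: "(4 * M + 2) * \<delta> \<le> d" using M0 unfolding \<delta>_def
    by (metis min.cobounded2 mult.commute pos_le_divide_eq)
  show ?thesis
  proof (intro exI[of _ \<delta>] conjI allI impI \<delta>0)
    fix n y t t'
    assume h: "hh n < \<delta>" and y: "\<bar>y\<bar> \<le> R" and t: "0 \<le> t" "t \<le> T" and t': "0 \<le> t'" "t' \<le> T"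
      and tt: "\<bar>t' - t\<bar> < \<delta>"
    define c where "c = lam t (X n t y)"
    have Xt: "\<bar>X n t y\<bar> \<le> \<bar>R\<bar> + M * \<bar>T\<bar>"
    proof -
      have "M * t \<le> M * \<bar>T\<bar>" using t M1 by (intro mult_left_mono) auto
      then show ?thesis using X_bound[OF t(1), of n y] y by linarith
    qed
    have slope: "c - e \<le> vv n y j \<and> vv n y j \<le> c + e" if j: "\<bar>real j * hh n - t\<bar> < \<bar>t' - t\<bar> + hh n" for j
    proof -
      have jh0: "0 \<le> real j * hh n" by (rule khh_nonneg)
      have jhT: "real j * hh n \<le> T + 1" using j h tt \<delta>_def t' t by (auto simp: abs_less_iff)
      have jt: "\<bar>real j * hh n - t\<bar> < 2 * \<delta>" using j h tt by linarith
      have PX: "\<bar>P n y j - X n t y\<bar> \<le> M * \<bar>real j * hh n - t\<bar>"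
        using X_lip[OF t(1) jh0, of n y] X_grid[of n j y] by simp
      have PX2: "\<bar>P n y j - X n t y\<bar> \<le> M * (2 * \<delta>)"
        using PX jt M1 by (smt (verit) mult_left_mono)
      have Mh: "M * hh n \<le> M * \<delta>" using h M1 by simp
      have close: "\<bar>lam (real j * hh n) z - c\<bar> < e" if z: "\<bar>z - P n y j\<bar> \<le> 2 * M * hh n" for z
      proof -
        have "\<bar>z - X n t y\<bar> \<le> 2 * M * \<delta> + M * (2 * \<delta>)" using z PX2 Mh by linarith
        moreover have "M * \<delta> \<le> M" using M1 \<delta>_def by simp
        ultimately have zb: "\<bar>z\<bar> \<le> R1" using Xt unfolding R1_def by linarith
        have "\<bar>real j * hh n - t\<bar> + \<bar>z - X n t y\<bar> < 2 * \<delta> + (2 * M * \<delta> + M * (2 * \<delta>))"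
          using jt \<open>\<bar>z - X n t y\<bar> \<le> _\<close> by linarith
        also have "\<dots> = (4 * M + 2) * \<delta>" by (simp add: algebra_simps)
        finally have "\<bar>real j * hh n - t\<bar> + \<bar>z - X n t y\<bar> < d" using \<delta>d by linarith
        then show ?thesis unfolding c_def
          by (intro d(2)) (use t jh0 jhT zb Xt R1_def M1 in auto)
      qed
      have up: "vv n y j \<le> c + e"
        using lt_le_lam[of n j "P n y j"] close[of "P n y j"] M1 hh_pos[of n]
        unfolding vv_def by (simp add: abs_less_iff)
      have "c \<le> M" unfolding c_def using lamb[OF t(1)] by (simp add: abs_le_iff)
      then have lo: "c - e \<le> vv n y j"
        unfolding vv_def
      proof (intro lt_lower)
        show "c - e \<le> M" using \<open>c \<le> M\<close> assms by simp
        fix z assume "\<bar>z - P n y j\<bar> \<le> 2 * M * hh n"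
        from close[OF this] show "c - e \<le> lam (real j * hh n) z" by (simp add: abs_less_iff)
      qed
      show ?thesis using up lo by simp
    qed
    show "\<bar>X n t' y - X n t y - (t' - t) * lam t (X n t y)\<bar> \<le> e * \<bar>t' - t\<bar>"
    proof (cases "t \<le> t'")
      case True
      have "(c - e) * (t' - t) \<le> X n t' y - X n t y \<and> X n t' y - X n t y \<le> (c + e) * (t' - t)"
        by (rule X_diff_bounds[OF t(1) True]) (intro slope, use True hh_pos[of n] in \<open>auto simp: abs_if algebra_simps\<close>)
      then have "\<bar>X n t' y - X n t y - (t' - t) * c\<bar> \<le> e * (t' - t)"
        by (subst abs_le_iff) (simp add: algebra_simps)
      then show ?thesis using True unfolding c_def[symmetric] by simp
    next
      case False
      have "(c - e) * (t - t') \<le> X n t y - X n t' y \<and> X n t y - X n t' y \<le> (c + e) * (t - t')"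
        by (rule X_diff_bounds[OF t'(1)]) (use False in simp, intro slope, use False in \<open>auto simp: abs_if algebra_simps\<close>)
      then have "\<bar>X n t' y - X n t y - (t' - t) * c\<bar> \<le> e * (t - t')"
        by (subst abs_le_iff) (simp add: algebra_simps)
      then show ?thesis using False unfolding c_def[symmetric] by simp
    qed
  qed
qed


lemma arctan_gap:
  assumes "a \<le> b" "\<bar>a\<bar> \<le> R" "\<bar>b\<bar> \<le> R"
  shows "(b - a) / (1 + R\<^sup>2) \<le> arctan b - arctan a"
proof (cases "a = b")
  case True then show ?thesis by simp
next
  case False
  then have ab: "a < b" using assms by simp
  obtain z where z: "a < z" "z < b" "arctan b - arctan a = (b - a) * inverse (1 + z\<^sup>2)"
    using MVT2[OF ab, of arctan "\<lambda>x. inverse (1 + x\<^sup>2)"] DERIV_arctan by blast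
  have "\<bar>z\<bar> \<le> R" using z assms by (auto simp: abs_le_iff)
  then have "z\<^sup>2 \<le> R\<^sup>2" by (metis abs_le_square_iff abs_of_nonneg abs_ge_zero order.trans abs_le_iff power2_abs)
  then have "inverse (1 + R\<^sup>2) \<le> inverse (1 + z\<^sup>2)"
    by (intro le_imp_inverse_le) (auto simp: add_pos_nonneg)
  then have "(b - a) * inverse (1 + R\<^sup>2) \<le> (b - a) * inverse (1 + z\<^sup>2)"
    using ab by (intro mult_left_mono) auto
  then show ?thesis using z(3) by (simp add: divide_inverse)
qed

definition ww :: "nat \<Rightarrow> nat \<Rightarrow> real" where
  "ww n j = 1 / (1 + real j * hh n) - 1 / (1 + real (Suc j) * hh n)"

lemma ww_eq: "ww n j = hh n / ((1 + real j * hh n) * (1 + real (Suc j) * hh n))"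
proof -
  have "0 < 1 + real j * hh n" "0 < 1 + real (Suc j) * hh n" using khh_nonneg[of j n] khh_nonneg[of "Suc j" n] by linarith+
  then show ?thesis unfolding ww_def by (simp add: field_simps)
qed

lemma ww_nonneg: "0 \<le> ww n j"
  unfolding ww_eq using hh_pos[of n] khh_nonneg[of j n] khh_nonneg[of "Suc j" n] by simp

lemma ww_sum: "(\<Sum>j<K. ww n j) \<le> 1"
proof -
  have "(\<Sum>j<K. ww n j) = 1 - 1 / (1 + real K * hh n)"
    unfolding ww_def using sum_lessThan_telescope'[of "\<lambda>j. 1 / (1 + real j * hh n)" K] by simp
  also have "\<dots> \<le> 1" using khh_nonneg[of K n] by simp
  finally show ?thesis .
qed

definition JJ :: "nat \<Rightarrow> nat" where "JJ n = (n + 1) * (n + 1)"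

definition S :: "nat \<Rightarrow> real \<Rightarrow> real" where
  "S n y = y + (\<Sum>j<JJ n. ww n j * arctan (P n y j))"

lemma S_close: "\<bar>S n y - y\<bar> \<le> 2"
proof -
  have "\<bar>\<Sum>j<JJ n. ww n j * arctan (P n y j)\<bar> \<le> (\<Sum>j<JJ n. ww n j * 2)"
  proof (rule order_trans[OF sum_abs], rule sum_mono)
    fix j
    have "\<bar>arctan (P n y j)\<bar> \<le> 2" using arctan_bounded[of "P n y j"] pi_less_4 by (simp add: abs_le_iff)
    then show "\<bar>ww n j * arctan (P n y j)\<bar> \<le> ww n j * 2"
      using ww_nonneg[of n j] by (simp add: abs_mult mult_left_mono)
  qed
  also have "\<dots> \<le> 2" using ww_sum[of n "JJ n"] by (simp add: sum_distrib_right[symmetric])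
  finally show ?thesis by (simp add: S_def)
qed

lemma S_mono: "y \<le> y' \<Longrightarrow> S n y \<le> S n y'"
  unfolding S_def
  by (intro add_mono sum_mono mult_left_mono arctan_monotone' P_mono ww_nonneg) auto

lemma S_cont: "continuous_on UNIV (S n)"
  unfolding S_def
  by (intro continuous_intros continuous_on_compose2[OF continuous_on_arctan P_cont]) auto

definition Y :: "nat \<Rightarrow> real \<Rightarrow> real" where "Y n s = (SOME y. S n y = s \<and> \<bar>y - s\<bar> \<le> 2)"

lemma Y_ex: "\<exists>y. S n y = s \<and> \<bar>y - s\<bar> \<le> 2"
proof -
  have "S n (s - 2) \<le> s" "s \<le> S n (s + 2)" using S_close[of n "s-2"] S_close[of n "s+2"] by (auto simp: abs_le_iff)
  then obtain y where "s - 2 \<le> y" "y \<le> s + 2" "S n y = s"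
    using IVT'[of "S n" "s-2" s "s+2"] continuous_on_subset[OF S_cont] by force
  then show ?thesis by (auto simp: abs_le_iff)
qed

lemma Y_prop: "S n (Y n s) = s" "\<bar>Y n s - s\<bar> \<le> 2"
  using someI_ex[OF Y_ex[of n s]] unfolding Y_def by auto

lemma Y_mono: assumes "s \<le> s'" shows "Y n s \<le> Y n s'"
proof (rule ccontr)
  assume "\<not> Y n s \<le> Y n s'"
  then have "S n (Y n s') \<le> S n (Y n s)" by (intro S_mono) simp
  then have "s = s'" using assms Y_prop(1)[of n s] Y_prop(1)[of n s'] by simp
  then show False using \<open>\<not> Y n s \<le> Y n s'\<close> by simp
qed


lemma S_gap:
  assumes yy: "y \<le> y'" "\<bar>y\<bar> \<le> R" "\<bar>y'\<bar> \<le> R" and t0: "0 \<le> t0" "t0 \<le> T"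
    and dl: "0 < \<delta>" "\<delta> \<le> 1" and g: "\<delta> \<le> X n t0 y' - X n t0 y"
    and hn: "hh n \<le> \<delta> / (16 * M)" and nT: "T + 2 \<le> real n + 1"
  shows "\<delta>\<^sup>2 / (16 * M * (3 + T)\<^sup>2 * (1 + (R + M * (T + 1))\<^sup>2)) \<le> S n y' - S n y"
proof -
  define h where "h = hh n"
  have h0: "0 < h" using hh_pos[of n] by (simp add: h_def)
  define w0 where "w0 = \<delta> / (4 * M)"
  have M0: "0 < M" using M1 by simp
  have w0pos: "0 < w0" using dl M0 by (simp add: w0_def)
  have w0le: "w0 \<le> 1/4" using dl M1 unfolding w0_def by (simp add: divide_simps)
  have hw: "4 * h \<le> w0" using hn M0 unfolding w0_def h_def by (simp add: field_simps)
  define R2 where "R2 = R + M * (T + 1)"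
  define j0 where "j0 = nat \<lceil>t0 / h\<rceil>"
  have j0r: "real j0 = of_int \<lceil>t0 / h\<rceil>" using t0 h0 by (simp add: j0_def)
  have "t0 / h \<le> real j0" using j0r le_of_int_ceiling[of "t0/h"] by simp
  then have j0a: "t0 \<le> real j0 * h" using h0 by (simp add: divide_le_eq)
  have j0b: "real j0 * h < t0 + h"
  proof -
    have "real j0 < t0 / h + 1" using j0r ceiling_correct[of "t0/h"] by linarith
    then show ?thesis using h0 by (simp add: field_simps)
  qed
  define m where "m = nat \<lfloor>w0 / h\<rfloor> - 1"
  have wh4: "4 \<le> w0 / h" using hw h0 by (simp add: le_divide_eq mult.commute)
  have fl: "4 \<le> \<lfloor>w0 / h\<rfloor>" using wh4 by (simp add: le_floor_iff)
  then have "1 \<le> nat \<lfloor>w0 / h\<rfloor>" by (simp add: le_nat_iff)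
  then have "real m = real (nat \<lfloor>w0 / h\<rfloor>) - 1" unfolding m_def by (simp add: of_nat_diff)
  then have mr: "real m = of_int \<lfloor>w0 / h\<rfloor> - 1" using fl by simp
  have m1: "w0 / h - 2 \<le> real m" "real m \<le> w0 / h - 1" using mr floor_correct[of "w0/h"] by linarith+
  have mh1: "w0 / 2 \<le> real m * h"
  proof -
    have aux: "\<And>q r::real. q - 2 \<le> r \<Longrightarrow> 4 \<le> q \<Longrightarrow> q / 2 \<le> r" by linarith
    have "w0 / h / 2 \<le> real m" by (rule aux[OF m1(1) wh4])
    then have "w0 / h / 2 * h \<le> real m * h" using h0 by (intro mult_right_mono) auto
    then show ?thesis using h0 by simp
  qed
  have mh2: "real m * h \<le> w0 - h" using m1(2) h0 by (simp add: field_simps)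
  define kap where "kap = (\<delta> / 2) / ((3 + T)\<^sup>2 * (1 + R2\<^sup>2))"
  have T0: "0 \<le> T" using t0 by simp
  have kap0: "0 \<le> kap" using dl T0 by (simp add: kap_def)
  have tm: "h * kap \<le> ww n j * (arctan (P n y' j) - arctan (P n y j))"
    if j: "j \<in> {j0..<j0+m}" for j
  proof -
    have "real j0 * h \<le> real j * h" using j h0 by (intro mult_right_mono) auto
    then have jlo: "t0 \<le> real j * h" using j0a by linarith
    have "real j + 1 \<le> real j0 + real m" using j by simp
    then have "(real j + 1) * h \<le> (real j0 + real m) * h" using h0 by (intro mult_right_mono) auto
    then have jhi: "(real j + 1) * h \<le> t0 + w0" using j0b mh2 by (simp add: algebra_simps)
    have jh0: "0 \<le> real j * h" using jlo t0 by simp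
    have gj: "\<delta> / 2 \<le> P n y' j - P n y j"
    proof -
      have "\<bar>X n (real j * h) y' - X n t0 y'\<bar> \<le> M * (real j * h - t0)" 
        using X_lip[OF t0(1) jh0, of n y'] jlo by simp
      moreover have "\<bar>X n (real j * h) y - X n t0 y\<bar> \<le> M * (real j * h - t0)" 
        using X_lip[OF t0(1) jh0, of n y] jlo by simp
      moreover have "M * (real j * h - t0) \<le> M * w0" using jhi h0 M0 by (intro mult_left_mono) (auto simp: algebra_simps)
      moreover have "M * w0 = \<delta> / 4" using M0 by (simp add: w0_def)
      ultimately show ?thesis using g X_grid[of n j y] X_grid[of n j y'] unfolding h_def by (simp add: abs_le_iff)
    qed
    have Pb: "\<bar>P n z j\<bar> \<le> R2" if "\<bar>z\<bar> \<le> R" for z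
    proof -
      have "real j * h \<le> T + 1" using jhi t0 w0le h0 by (simp add: algebra_simps)
      then have "M * (real j * h) \<le> M * (T + 1)" using M0 by (intro mult_left_mono) auto
      then show ?thesis using X_bound[OF jh0, of n z] X_grid[of n j z] that unfolding R2_def h_def by simp
    qed
    have at: "(\<delta>/2) / (1 + R2\<^sup>2) \<le> arctan (P n y' j) - arctan (P n y j)"
    proof -
      have "(\<delta>/2) / (1 + R2\<^sup>2) \<le> (P n y' j - P n y j) / (1 + R2\<^sup>2)"
        using gj by (intro divide_right_mono) auto
      also have "\<dots> \<le> arctan (P n y' j) - arctan (P n y j)"
        by (rule arctan_gap) (use P_mono[OF yy(1)] Pb yy in auto)
      finally show ?thesis .
    qed
    have wb: "h / (3 + T)\<^sup>2 \<le> ww n j"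
    proof -
      have a: "1 + real j * h \<le> 3 + T" "1 + real (Suc j) * h \<le> 3 + T" using jhi jh0 t0 w0le h0 by (auto simp: algebra_simps)
      have "(1 + real j * h) * (1 + real (Suc j) * h) \<le> (3 + T) * (3 + T)"
        using a jh0 h0 T0 by (intro mult_mono) auto
      then have "h / ((3 + T) * (3 + T)) \<le> h / ((1 + real j * h) * (1 + real (Suc j) * h))"
      proof (rule divide_left_mono)
        have "0 < 1 + real j * h" "0 < 1 + real (Suc j) * h" using h0 by (auto intro!: add_pos_nonneg mult_nonneg_nonneg simp del: of_nat_Suc)
        then show "0 < (3 + T) * (3 + T) * ((1 + real j * h) * (1 + real (Suc j) * h))" using T0 by simp
      qed (use h0 in auto)
      then show ?thesis unfolding ww_eq h_def[symmetric] by (simp add: power2_eq_square)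
    qed
    have "h * kap = (h / (3 + T)\<^sup>2) * ((\<delta>/2) / (1 + R2\<^sup>2))" unfolding kap_def by simp
    also have "\<dots> \<le> ww n j * (arctan (P n y' j) - arctan (P n y j))"
      using wb at h0 dl ww_nonneg[of n j] by (intro mult_mono) auto
    finally show ?thesis .
  qed
  have sub: "{j0..<j0+m} \<subseteq> {..<JJ n}"
  proof -
    have "(real j0 + real m) * h \<le> t0 + w0" using j0b mh2 by (simp add: algebra_simps)
    also have "\<dots> \<le> T + 1" using t0 w0le by simp
    also have "\<dots> \<le> (real n + 1) * (real n + 1) * h"
    proof -
      have "(real n + 1) * h = 1" using h_def hh_def by simp
      moreover have "(real n + 1) * (real n + 1) * h = (real n + 1) * ((real n + 1) * h)" by (simp only: mult.assoc)
      ultimately have "(real n + 1) * (real n + 1) * h = real n + 1" by simp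
      then show ?thesis using nT by linarith
    qed
    finally have "real j0 + real m \<le> (real n + 1) * (real n + 1)" using h0 by simp
    then have "real (j0 + m) \<le> real (JJ n)" unfolding JJ_def by (simp add: algebra_simps)
    then have "j0 + m \<le> JJ n" by (simp only: of_nat_le_iff)
    then show ?thesis by auto
  qed
  have nonneg: "0 \<le> ww n j * (arctan (P n y' j) - arctan (P n y j))" for j
    using ww_nonneg[of n j] arctan_monotone'[OF P_mono[OF yy(1)]] by simp
  have "real m * (h * kap) = (\<Sum>j\<in>{j0..<j0+m}. h * kap)" by simp
  also have "\<dots> \<le> (\<Sum>j\<in>{j0..<j0+m}. ww n j * (arctan (P n y' j) - arctan (P n y j)))"
    by (rule sum_mono) (rule tm)
  also have "\<dots> \<le> (\<Sum>j<JJ n. ww n j * (arctan (P n y' j) - arctan (P n y j)))"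
    by (rule sum_mono2[OF _ sub]) (use nonneg in auto)
  also have "\<dots> \<le> S n y' - S n y"
  proof -
    have "(\<Sum>j<JJ n. ww n j * (arctan (P n y' j) - arctan (P n y j))) =
       (\<Sum>j<JJ n. ww n j * arctan (P n y' j)) - (\<Sum>j<JJ n. ww n j * arctan (P n y j))"
      by (simp add: right_diff_distrib sum_subtractf)
    then show ?thesis unfolding S_def using yy(1) by linarith
  qed
  finally have A: "real m * h * kap \<le> S n y' - S n y" by (simp add: mult.assoc)
  have "w0 / 2 * kap \<le> real m * h * kap" using mh1 kap0 by (intro mult_right_mono) auto
  moreover have "w0 / 2 * kap = \<delta>\<^sup>2 / (16 * M * (3 + T)\<^sup>2 * (1 + (R + M * (T + 1))\<^sup>2))"
    unfolding w0_def kap_def R2_def[symmetric] by (simp add: power2_eq_square)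
  ultimately show ?thesis using A by linarith
qed

end

context charsetting begin

definition Psi :: "nat \<Rightarrow> real \<Rightarrow> real \<Rightarrow> real" where "Psi n t s = X n t (Y n s)"

lemma Psi_mono: "0 \<le> t \<Longrightarrow> s \<le> s' \<Longrightarrow> Psi n t s \<le> Psi n t s'"
  unfolding Psi_def by (intro X_mono Y_mono)

lemma Psi_lip: "0 \<le> t \<Longrightarrow> 0 \<le> t' \<Longrightarrow> \<bar>Psi n t' s - Psi n t s\<bar> \<le> M * \<bar>t' - t\<bar>"
  unfolding Psi_def by (rule X_lip)

lemma Y_bound: "\<bar>Y n s\<bar> \<le> \<bar>s\<bar> + 2" using Y_prop(2)[of n s] by linarith

lemma Psi_bound: "0 \<le> t \<Longrightarrow> \<bar>Psi n t s\<bar> \<le> \<bar>s\<bar> + 2 + M * t"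
  unfolding Psi_def using X_bound[of t n "Y n s"] Y_bound[of n s] by linarith

lemma Psi0: "\<bar>Psi n 0 s - s\<bar> \<le> 2"
  unfolding Psi_def X0 by (rule Y_prop(2))

lemma hh_mono: "N \<le> n \<Longrightarrow> hh n \<le> hh N"
  unfolding hh_def by (simp add: frac_le)

lemma Psi_equi:
  assumes "0 < e"
  shows "\<exists>d>0. \<exists>N. \<forall>n\<ge>N. \<forall>t s s'. 0 \<le> t \<longrightarrow> t \<le> T \<longrightarrow> \<bar>s\<bar> \<le> R \<longrightarrow> \<bar>s'\<bar> \<le> R \<longrightarrow> \<bar>s - s'\<bar> < d
     \<longrightarrow> \<bar>Psi n t s - Psi n t s'\<bar> < e"
proof -
  define \<delta> where "\<delta> = min e 1"
  have \<delta>: "0 < \<delta>" "\<delta> \<le> 1" "\<delta> \<le> e" using assms by (auto simp: \<delta>_def)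
  define R' where "R' = \<bar>R\<bar> + 2"
  define d where "d = \<delta>\<^sup>2 / (16 * M * (3 + \<bar>T\<bar>)\<^sup>2 * (1 + (R' + M * (\<bar>T\<bar> + 1))\<^sup>2))"
  have d0: "0 < d" unfolding d_def using \<delta> M1 by (intro divide_pos_pos mult_pos_pos add_pos_nonneg) auto
  define N where "N = nat \<lceil>max (16 * M / \<delta>) (\<bar>T\<bar> + 2)\<rceil>"
  have N1: "16 * M / \<delta> \<le> real N" "\<bar>T\<bar> + 2 \<le> real N" unfolding N_def by linarith+
  show ?thesis
  proof (intro exI[of _ d] exI[of _ N] conjI d0 allI impI)
    fix n t s s' assume n: "N \<le> n" and t: "0 \<le> t" "t \<le> T" and s: "\<bar>s\<bar> \<le> R" "\<bar>s'\<bar> \<le> R" and ss: "\<bar>s - s'\<bar> < d"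
    have hn: "hh n \<le> \<delta> / (16 * M)"
    proof -
      have "16 * M / \<delta> \<le> real n + 1" using N1 n by simp
      then have "1 / (real n + 1) \<le> 1 / (16 * M / \<delta>)"
        using \<delta> M1 by (intro divide_left_mono mult_pos_pos) auto
      then show ?thesis unfolding hh_def by simp
    qed
    have nT: "\<bar>T\<bar> + 2 \<le> real n + 1" using N1 n by simp
    have key: "\<bar>Psi n t a - Psi n t b\<bar> < e" if ab: "a \<le> b" "\<bar>a\<bar> \<le> R" "\<bar>b\<bar> \<le> R" "b - a < d" for a b
    proof (rule ccontr)
      assume "\<not> ?thesis"
      then have g: "\<delta> \<le> X n t (Y n b) - X n t (Y n a)"
        using Psi_mono[OF t(1) ab(1), of n] \<delta>(3) unfolding Psi_def by simp
      have "d \<le> S n (Y n b) - S n (Y n a)"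
        unfolding d_def
        by (rule S_gap[OF Y_mono[OF ab(1)] _ _ t(1) _ \<delta>(1,2) g hn nT])
           (use Y_bound[of n a] Y_bound[of n b] ab t in \<open>auto simp: R'_def\<close>)
      then show False using Y_prop(1)[of n a] Y_prop(1)[of n b] ab(4) by simp
    qed
    show "\<bar>Psi n t s - Psi n t s'\<bar> < e"
    proof (cases "s \<le> s'")
      case True then show ?thesis using key[of s s'] s ss by (simp add: abs_minus_commute)
    next
      case False then show ?thesis using key[of s' s] s ss by simp
    qed
  qed
qed


lemma abs3: fixes a b c d x y z :: real
  shows "\<bar>a - c\<bar> < x \<Longrightarrow> \<bar>c - d\<bar> < y \<Longrightarrow> \<bar>b - d\<bar> < z \<Longrightarrow> \<bar>a - b\<bar> < x + y + z"
  by (simp add: abs_less_iff)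

lemma abs2: fixes a b c x y :: real
  shows "\<bar>a - c\<bar> \<le> x \<Longrightarrow> \<bar>c - b\<bar> < y \<Longrightarrow> \<bar>a - b\<bar> < x + y"
  by (simp add: abs_less_iff abs_le_iff)

lemma conv_subseq:
  obtains r where "strict_mono r" "\<And>t s. 0 \<le> t \<Longrightarrow> convergent (\<lambda>m. Psi (r m) t s)"
proof -
  define D where "D = {p :: real \<times> real. fst p \<in> \<rat> \<and> snd p \<in> \<rat> \<and> 0 \<le> fst p}"
  have cD: "countable D"
  proof -
    have "D \<subseteq> \<rat> \<times> \<rat>" unfolding D_def by (auto simp: mem_Times_iff)
    moreover have "countable (\<rat> \<times> \<rat> :: (real \<times> real) set)" using countable_rat by blast
    ultimately show ?thesis by (rule countable_subset)
  qed
  define B where "B p = 1 + \<bar>snd p\<bar> + 2 + M * fst p" for p :: "real \<times> real"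
  have Bpos: "0 < B p" if "0 \<le> fst p" for p using that M1 by (simp add: B_def add_pos_nonneg)
  define F where "F n p = Psi n (fst p) (snd p) / B p" for n p
  have Fb: "norm (F n p) \<le> 1" if "p \<in> D" for n p
  proof -
    have p: "0 \<le> fst p" using that by (simp add: D_def)
    have "\<bar>Psi n (fst p) (snd p)\<bar> \<le> B p" using Psi_bound[OF p, of n "snd p"] by (simp add: B_def)
    then show ?thesis using Bpos[OF p] by (simp add: F_def abs_divide)
  qed
  obtain r where r: "strict_mono r" and rc: "\<And>p. p \<in> D \<Longrightarrow> \<exists>l. (\<lambda>m. F (r m) p) \<longlonglongrightarrow> l"
    using function_convergent_subsequence[OF cD, of F 1] Fb by blast
  have convD: "convergent (\<lambda>m. Psi (r m) (fst p) (snd p))" if p: "p \<in> D" for p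
  proof -
    obtain l where l: "(\<lambda>m. F (r m) p) \<longlonglongrightarrow> l" using rc[OF p] by blast
    have p0: "0 \<le> fst p" using p by (simp add: D_def)
    have "(\<lambda>m. B p * F (r m) p) \<longlonglongrightarrow> B p * l" by (rule tendsto_mult_left[OF l])
    moreover have "B p * F (r m) p = Psi (r m) (fst p) (snd p)" for m
      using Bpos[OF p0] by (simp add: F_def)
    ultimately show ?thesis unfolding convergent_def by auto
  qed
  show ?thesis
  proof (rule that[OF r])
    fix t s :: real assume t: "0 \<le> t"
    show "convergent (\<lambda>m. Psi (r m) t s)"
    proof (rule Cauchy_convergent, unfold Cauchy_def, intro allI impI)
      fix e :: real assume e: "0 < e"
      obtain d N where d: "0 < d" and dN: "\<And>n t' a b. N \<le> n \<Longrightarrow> 0 \<le> t' \<Longrightarrow> t' \<le> t + 1 \<Longrightarrow> \<bar>a\<bar> \<le> \<bar>s\<bar> + 1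
         \<Longrightarrow> \<bar>b\<bar> \<le> \<bar>s\<bar> + 1 \<Longrightarrow> \<bar>a - b\<bar> < d \<Longrightarrow> \<bar>Psi n t' a - Psi n t' b\<bar> < e / 5"
        using Psi_equi[of "e/5" "t+1" "\<bar>s\<bar>+1"] e by (metis divide_pos_pos zero_less_numeral)
      obtain qs where qs: "qs \<in> \<rat>" "s < qs" "qs < s + min d 1"
        using Rats_dense_in_real[of s "s + min d 1"] d by auto
      obtain qt where qt: "qt \<in> \<rat>" "t < qt" "qt < t + min 1 (e / (5 * M))"
        using Rats_dense_in_real[of t "t + min 1 (e / (5 * M))"] e M1 by auto
      have qD: "(qt, qs) \<in> D" using qs qt t by (simp add: D_def)
      have "Cauchy (\<lambda>m. Psi (r m) qt qs)" using convD[OF qD] by (simp add: Cauchy_convergent_iff)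
      then obtain K where K: "\<And>m m'. K \<le> m \<Longrightarrow> K \<le> m' \<Longrightarrow> dist (Psi (r m) qt qs) (Psi (r m') qt qs) < e / 5"
        unfolding Cauchy_def using e by (meson divide_pos_pos zero_less_numeral)
      have close: "\<bar>Psi (r m) t s - Psi (r m) qt qs\<bar> < 2 * e / 5" if m: "N \<le> m" for m
      proof -
        have rm: "N \<le> r m" using m seq_suble[OF r, of m] by simp
        have a: "\<bar>Psi (r m) t s - Psi (r m) t qs\<bar> < e / 5"
          by (rule dN[OF rm t]) (use qs in auto)
        have "\<bar>Psi (r m) qt qs - Psi (r m) t qs\<bar> \<le> M * \<bar>qt - t\<bar>"
          by (rule Psi_lip) (use t qt in auto)
        also have "\<dots> < M * (e / (5 * M))" using qt M1 by (intro mult_strict_left_mono) auto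
        also have "\<dots> = e / 5" using M1 by simp
        finally show ?thesis using a by linarith
      qed
      show "\<exists>K. \<forall>m\<ge>K. \<forall>n\<ge>K. dist (Psi (r m) t s) (Psi (r n) t s) < e"
      proof (intro exI[of _ "max K N"] allI impI)
        fix m n assume mn: "max K N \<le> m" "max K N \<le> n"
        have "dist (Psi (r m) qt qs) (Psi (r n) qt qs) < e / 5" using K mn by simp
        then show "dist (Psi (r m) t s) (Psi (r n) t s) < e"
        proof -
          have "N \<le> m" "N \<le> n" using mn by auto
          then have c1: "\<bar>Psi (r m) t s - Psi (r m) qt qs\<bar> < 2 * e / 5" "\<bar>Psi (r n) t s - Psi (r n) qt qs\<bar> < 2 * e / 5"
            using close by auto
          have "\<bar>Psi (r m) t s - Psi (r n) t s\<bar> < 2 * e / 5 + e / 5 + 2 * e / 5"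
            by (rule abs3[OF c1(1) _ c1(2)]) (use \<open>dist _ _ < e / 5\<close> in \<open>simp add: dist_real_def\<close>)
          then show ?thesis by (simp add: dist_real_def)
        qed
      qed
    qed
  qed
qed


definition rr :: "nat \<Rightarrow> nat" where
  "rr = (SOME r. strict_mono r \<and> (\<forall>t s. 0 \<le> t \<longrightarrow> convergent (\<lambda>m. Psi (r m) t s)))"

lemma rr_prop: "strict_mono rr" "0 \<le> t \<Longrightarrow> convergent (\<lambda>m. Psi (rr m) t s)"
proof -
  obtain r where "strict_mono r" "\<And>t s. 0 \<le> t \<Longrightarrow> convergent (\<lambda>m. Psi (r m) t s)" using conv_subseq by blast
  then have "\<exists>r. strict_mono r \<and> (\<forall>t s. 0 \<le> t \<longrightarrow> convergent (\<lambda>m. Psi (r m) t s))" by blast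
  from someI_ex[OF this] show "strict_mono rr" "0 \<le> t \<Longrightarrow> convergent (\<lambda>m. Psi (rr m) t s)"
    unfolding rr_def[symmetric] by auto
qed

definition XL :: "real \<Rightarrow> real \<Rightarrow> real" where "XL t s = lim (\<lambda>m. Psi (rr m) t s)"

lemma XL_lim: "0 \<le> t \<Longrightarrow> (\<lambda>m. Psi (rr m) t s) \<longlonglongrightarrow> XL t s"
  unfolding XL_def using rr_prop(2) by (simp add: convergent_LIMSEQ_iff)

lemma rr_ge: "N \<le> m \<Longrightarrow> N \<le> rr m"
  using seq_suble[OF rr_prop(1), of m] by simp

lemma XL_mono: assumes "0 \<le> t" "s \<le> s'" shows "XL t s \<le> XL t s'"
  by (rule LIMSEQ_le[OF XL_lim[OF assms(1)] XL_lim[OF assms(1)]]) (use Psi_mono[OF assms] in auto)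

lemma XL_lip: assumes "0 \<le> t" "0 \<le> t'" shows "\<bar>XL t' s - XL t s\<bar> \<le> M * \<bar>t' - t\<bar>"
proof -
  have "(\<lambda>m. \<bar>Psi (rr m) t' s - Psi (rr m) t s\<bar>) \<longlonglongrightarrow> \<bar>XL t' s - XL t s\<bar>"
    by (intro tendsto_intros XL_lim assms)
  then show ?thesis by (rule LIMSEQ_le_const2) (use Psi_lip[OF assms] in auto)
qed

lemma XL0: "\<bar>XL 0 s - s\<bar> \<le> 2"
proof -
  have "(\<lambda>m. \<bar>Psi (rr m) 0 s - s\<bar>) \<longlonglongrightarrow> \<bar>XL 0 s - s\<bar>"
    by (intro tendsto_intros XL_lim) simp
  then show ?thesis by (rule LIMSEQ_le_const2) (use Psi0 in auto)
qed

lemma XL_equi: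
  assumes "0 < e"
  shows "\<exists>d>0. \<forall>t s s'. 0 \<le> t \<longrightarrow> t \<le> T \<longrightarrow> \<bar>s\<bar> \<le> R \<longrightarrow> \<bar>s'\<bar> \<le> R \<longrightarrow> \<bar>s - s'\<bar> < d
     \<longrightarrow> \<bar>XL t s - XL t s'\<bar> \<le> e"
proof -
  obtain d N where d: "0 < d" and dN: "\<And>n t s s'. N \<le> n \<Longrightarrow> 0 \<le> t \<Longrightarrow> t \<le> T \<Longrightarrow> \<bar>s\<bar> \<le> R \<Longrightarrow> \<bar>s'\<bar> \<le> R
     \<Longrightarrow> \<bar>s - s'\<bar> < d \<Longrightarrow> \<bar>Psi n t s - Psi n t s'\<bar> < e"
    using Psi_equi[OF assms, of T R] by metis
  show ?thesis
  proof (intro exI[of _ d] conjI d allI impI)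
    fix t s s' assume a: "0 \<le> t" "t \<le> T" "\<bar>s\<bar> \<le> R" "\<bar>s'\<bar> \<le> R" "\<bar>s - s'\<bar> < d"
    have "(\<lambda>m. \<bar>Psi (rr m) t s - Psi (rr m) t s'\<bar>) \<longlonglongrightarrow> \<bar>XL t s - XL t s'\<bar>"
      by (intro tendsto_intros XL_lim a)
    then show "\<bar>XL t s - XL t s'\<bar> \<le> e"
    proof (rule LIMSEQ_le_const2)
      show "\<exists>N'. \<forall>m\<ge>N'. \<bar>Psi (rr m) t s - Psi (rr m) t s'\<bar> \<le> e"
        by (intro exI[of _ N] allI impI, rule less_imp_le, rule dN[OF rr_ge a], simp)
    qed
  qed
qed

lemma dist_pair_le: "\<bar>fst p - fst q\<bar> \<le> dist p q" "\<bar>snd p - snd q\<bar> \<le> dist p q"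
  for p q :: "real \<times> real"
  by (metis dist_fst_le dist_real_def, metis dist_snd_le dist_real_def)

lemma XL_cont: "continuous_on ({0..} \<times> UNIV) (\<lambda>p. XL (fst p) (snd p))"
proof (unfold continuous_on_iff, intro ballI allI impI)
  fix p :: "real \<times> real" and e :: real assume p: "p \<in> {0..} \<times> UNIV" and e: "0 < e"
  obtain d where d: "0 < d" and dd: "\<And>t s s'. 0 \<le> t \<Longrightarrow> t \<le> fst p + 1 \<Longrightarrow> \<bar>s\<bar> \<le> \<bar>snd p\<bar> + 1 \<Longrightarrow> \<bar>s'\<bar> \<le> \<bar>snd p\<bar> + 1
     \<Longrightarrow> \<bar>s - s'\<bar> < d \<Longrightarrow> \<bar>XL t s - XL t s'\<bar> \<le> e / 2"
    using XL_equi[of "e/2" "fst p + 1" "\<bar>snd p\<bar> + 1"] e by (metis half_gt_zero)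
  define d' where "d' = min (min d 1) (e / (2 * M))"
  have d'0: "0 < d'" using d e M1 by (simp add: d'_def)
  show "\<exists>d>0. \<forall>q\<in>{0..} \<times> UNIV. dist q p < d \<longrightarrow> dist (XL (fst q) (snd q)) (XL (fst p) (snd p)) < e"
  proof (intro exI[of _ d'] conjI d'0 ballI impI)
    fix q :: "real \<times> real" assume q: "q \<in> {0..} \<times> UNIV" and dq: "dist q p < d'"
    have t: "\<bar>fst q - fst p\<bar> < d'" "\<bar>snd q - snd p\<bar> < d'" using dist_pair_le[of q p] dq by linarith+
    have q0: "0 \<le> fst q" "0 \<le> fst p" using p q by (auto simp: mem_Times_iff)
    have A: "\<bar>XL (fst q) (snd q) - XL (fst q) (snd p)\<bar> \<le> e / 2"
      by (rule dd) (use q0 t in \<open>auto simp: d'_def abs_less_iff\<close>)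
    have "\<bar>XL (fst q) (snd p) - XL (fst p) (snd p)\<bar> \<le> M * \<bar>fst q - fst p\<bar>" by (rule XL_lip) (use q0 in auto)
    also have "\<dots> < M * (e / (2 * M))"
      using t M1 by (intro mult_strict_left_mono) (auto simp: d'_def)
    also have "\<dots> = e / 2" using M1 by simp
    finally have "\<bar>XL (fst q) (snd p) - XL (fst p) (snd p)\<bar> < e / 2" .
    show "dist (XL (fst q) (snd q)) (XL (fst p) (snd p)) < e"
      using abs2[OF A \<open>\<bar>XL (fst q) (snd p) - XL (fst p) (snd p)\<bar> < e / 2\<close>] unfolding dist_real_def by simp
  qed
qed


lemma hh_small: assumes "0 < \<delta>" shows "\<exists>N. \<forall>n\<ge>N. hh n < \<delta>"
proof (intro exI[of _ "nat \<lceil>1 / \<delta>\<rceil>"] allI impI)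
  fix n assume n: "nat \<lceil>1 / \<delta>\<rceil> \<le> n"
  then have "1 / \<delta> \<le> real n" by linarith
  then have "1 / \<delta> < real n + 1" by simp
  then show "hh n < \<delta>" unfolding hh_def using assms
    by (simp add: divide_less_eq mult.commute)
qed

lemma lam_isCont: assumes "0 \<le> t" shows "isCont (lam t) z"
proof -
  have "continuous_on UNIV (\<lambda>z. lam (fst (t, z)) (snd (t, z)))"
    by (rule continuous_on_compose2[OF lamc]) (use assms in \<open>auto intro!: continuous_intros\<close>)
  then show ?thesis by (simp add: continuous_on_eq_continuous_at)
qed

lemma XL_slope:
  assumes "0 < e"
  shows "\<exists>\<delta>>0. \<forall>t t'. 0 \<le> t \<longrightarrow> t \<le> T \<longrightarrow> 0 \<le> t' \<longrightarrow> t' \<le> T \<longrightarrow> \<bar>t' - t\<bar> < \<delta>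
     \<longrightarrow> \<bar>XL t' s - XL t s - (t' - t) * lam t (XL t s)\<bar> \<le> e * \<bar>t' - t\<bar>"
proof -
  obtain \<delta> where \<delta>: "0 < \<delta>" and est: "\<And>n y t t'. hh n < \<delta> \<Longrightarrow> \<bar>y\<bar> \<le> \<bar>s\<bar> + 2 \<Longrightarrow> 0 \<le> t \<Longrightarrow> t \<le> T \<Longrightarrow> 0 \<le> t'
     \<Longrightarrow> t' \<le> T \<Longrightarrow> \<bar>t' - t\<bar> < \<delta> \<Longrightarrow> \<bar>X n t' y - X n t y - (t' - t) * lam t (X n t y)\<bar> \<le> e * \<bar>t' - t\<bar>"
    using slope_est[OF assms, of "\<bar>s\<bar> + 2" T] by metis
  obtain N where N: "\<And>n. N \<le> n \<Longrightarrow> hh n < \<delta>" using hh_small[OF \<delta>] by blast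
  show ?thesis
  proof (intro exI[of _ \<delta>] conjI \<delta> allI impI)
    fix t t' assume a: "0 \<le> t" "t \<le> T" "0 \<le> t'" "t' \<le> T" "\<bar>t' - t\<bar> < \<delta>"
    have "(\<lambda>m. \<bar>Psi (rr m) t' s - Psi (rr m) t s - (t' - t) * lam t (Psi (rr m) t s)\<bar>)
        \<longlonglongrightarrow> \<bar>XL t' s - XL t s - (t' - t) * lam t (XL t s)\<bar>"
      by (intro tendsto_intros XL_lim a isCont_tendsto_compose[OF lam_isCont[OF a(1)]])
    then show "\<bar>XL t' s - XL t s - (t' - t) * lam t (XL t s)\<bar> \<le> e * \<bar>t' - t\<bar>"
    proof (rule LIMSEQ_le_const2)
      show "\<exists>N'. \<forall>m\<ge>N'. \<bar>Psi (rr m) t' s - Psi (rr m) t s - (t' - t) * lam t (Psi (rr m) t s)\<bar> \<le> e * \<bar>t' - t\<bar>"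
        unfolding Psi_def
        by (intro exI[of _ N] allI impI, rule est[OF N[OF rr_ge] Y_bound a], simp)
    qed
  qed
qed

lemma XL_deriv:
  assumes "0 < t"
  shows "((\<lambda>\<tau>. XL \<tau> s) has_real_derivative lam t (XL t s)) (at t)"
proof -
  have "((\<lambda>x. (XL x s - XL t s) / (x - t)) \<longlongrightarrow> lam t (XL t s)) (at t)"
  proof (unfold LIM_eq, intro allI impI)
    fix r :: real assume r: "0 < r"
    obtain \<delta> where \<delta>: "0 < \<delta>" and est: "\<And>t1 t'. 0 \<le> t1 \<Longrightarrow> t1 \<le> t + 1 \<Longrightarrow> 0 \<le> t' \<Longrightarrow> t' \<le> t + 1
      \<Longrightarrow> \<bar>t' - t1\<bar> < \<delta> \<Longrightarrow> \<bar>XL t' s - XL t1 s - (t' - t1) * lam t1 (XL t1 s)\<bar> \<le> r / 2 * \<bar>t' - t1\<bar>"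
      using XL_slope[of "r/2" "t+1" s] r by (metis half_gt_zero)
    show "\<exists>\<sigma>>0. \<forall>x. x \<noteq> t \<and> norm (x - t) < \<sigma> \<longrightarrow> norm ((XL x s - XL t s) / (x - t) - lam t (XL t s)) < r"
    proof (intro exI[of _ "min \<delta> (min t 1)"] conjI allI impI)
      show "0 < min \<delta> (min t 1)" using \<delta> assms by simp
      fix x assume x: "x \<noteq> t \<and> norm (x - t) < min \<delta> (min t 1)"
      then have xt: "x - t \<noteq> 0" "0 \<le> x" "x \<le> t + 1" "\<bar>x - t\<bar> < \<delta>" by (auto simp: abs_less_iff)
      have E: "\<bar>XL x s - XL t s - (x - t) * lam t (XL t s)\<bar> \<le> r / 2 * \<bar>x - t\<bar>"
        by (rule est) (use xt assms in auto)
      have "(XL x s - XL t s) / (x - t) - lam t (XL t s) = (XL x s - XL t s - (x - t) * lam t (XL t s)) / (x - t)"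
        using xt(1) by (simp add: field_simps)
      then have "\<bar>(XL x s - XL t s) / (x - t) - lam t (XL t s)\<bar> = \<bar>XL x s - XL t s - (x - t) * lam t (XL t s)\<bar> / \<bar>x - t\<bar>"
        by (simp add: abs_divide)
      also have "\<dots> \<le> r / 2" using E xt(1) by (simp add: divide_le_eq)
      also have "\<dots> < r" using r by simp
      finally show "norm ((XL x s - XL t s) / (x - t) - lam t (XL t s)) < r" by simp
    qed
  qed
  then show ?thesis by (simp add: has_field_derivative_iff)
qed

end


lemma lip_abs_cont:
  fixes \<gamma> :: "real \<Rightarrow> real"
  assumes M: "0 < M" and lip: "\<And>t t'. 0 \<le> t \<Longrightarrow> 0 \<le> t' \<Longrightarrow> \<bar>\<gamma> t' - \<gamma> t\<bar> \<le> M * \<bar>t' - t\<bar>"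
  shows "loc_abs_cont_on {0..} \<gamma>"
  unfolding loc_abs_cont_on_def abs_cont_on_def
proof (intro allI impI)
  fix a b e :: real assume ab: "{a..b} \<subseteq> {0..}" and e: "0 < e"
  show "\<exists>d>0. \<forall>S. finite S \<and> (\<forall>(a', b')\<in>S. a' \<le> b' \<and> {a'..b'} \<subseteq> {a..b}) \<and>
      pairwise (\<lambda>p q. {fst p<..<snd p} \<inter> {fst q<..<snd q} = {}) S \<and> (\<Sum>(a, b)\<in>S. b - a) < d \<longrightarrow>
      (\<Sum>(a, b)\<in>S. \<bar>\<gamma> b - \<gamma> a\<bar>) < e"
  proof (intro exI[of _ "e / M"] conjI allI impI)
    show "0 < e / M" using e M by simp
    fix S :: "(real \<times> real) set"
    assume S: "finite S \<and> (\<forall>(a', b')\<in>S. a' \<le> b' \<and> {a'..b'} \<subseteq> {a..b}) \<and>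
      pairwise (\<lambda>p q. {fst p<..<snd p} \<inter> {fst q<..<snd q} = {}) S \<and> (\<Sum>(a, b)\<in>S. b - a) < e / M"
    have "(\<Sum>(a, b)\<in>S. \<bar>\<gamma> b - \<gamma> a\<bar>) \<le> (\<Sum>(a, b)\<in>S. M * (b - a))"
    proof (rule sum_mono)
      fix p assume p: "p \<in> S"
      obtain a' b' where pe: "p = (a', b')" by fastforce
      have "a' \<le> b'" "{a'..b'} \<subseteq> {a..b}" using S p pe by auto
      then have "0 \<le> a'" "0 \<le> b'" using ab by auto
      then show "(case p of (a, b) \<Rightarrow> \<bar>\<gamma> b - \<gamma> a\<bar>) \<le> (case p of (a, b) \<Rightarrow> M * (b - a))"
        using lip[of a' b'] \<open>a' \<le> b'\<close> pe by simp
    qed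
    also have "\<dots> = M * (\<Sum>(a, b)\<in>S. b - a)" by (simp add: sum_distrib_left case_prod_unfold)
    also have "\<dots> < M * (e / M)" using S M by (intro mult_strict_left_mono) auto
    also have "\<dots> = e" using M by simp
    finally show "(\<Sum>(a, b)\<in>S. \<bar>\<gamma> b - \<gamma> a\<bar>) < e" .
  qed
qed

theorem lemma1p3:
  fixes f :: "real \<Rightarrow> real" and u :: "real \<times> real \<Rightarrow> real"
  assumes "C2 f"
    and "continuous_on ({0..} \<times> UNIV) u"
    and "bounded (u ` ({0..} \<times> UNIV))"
  shows "(\<exists>X. lagrangian_param f u X) \<and>
         (\<forall>g. g \<in> borel_measurable borel \<and> bounded (range g) \<and> broad_solution f u g \<longrightarrow>
            (\<forall>X. lagrangian_param f u X \<longrightarrow> lagrangian_solution f u X g))"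
proof
  have df: "continuous_on UNIV (deriv f)"
    using assms(1) unfolding C2_def
    by (intro continuous_at_imp_continuous_on) (auto intro: differentiable_imp_continuous_within)
  obtain B where B: "\<And>p. p \<in> {0..} \<times> UNIV \<Longrightarrow> \<bar>u p\<bar> \<le> B"
    using assms(3) unfolding bounded_iff by auto
  have "compact (deriv f ` {-B..B})"
    by (rule compact_continuous_image[OF continuous_on_subset[OF df]]) auto
  then have "bounded (deriv f ` {-B..B})" by (rule compact_imp_bounded)
  then obtain M0 where M0: "\<And>x. x \<in> {-B..B} \<Longrightarrow> \<bar>deriv f x\<bar> \<le> M0"
    unfolding bounded_iff by force
  define M where "M = max 1 M0"
  define lam where "lam t z = deriv f (u (t, z))" for t z
  interpret cs: charsetting lam M
  proof
    show "1 \<le> M" by (simp add: M_def)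
    fix t z :: real assume "0 \<le> t"
    then have "\<bar>u (t, z)\<bar> \<le> B" using B by auto
    then show "\<bar>lam t z\<bar> \<le> M" using M0[of "u (t,z)"] by (auto simp: lam_def M_def abs_le_iff)
  next
    show "continuous_on ({0..} \<times> UNIV) (\<lambda>p. lam (fst p) (snd p))"
      unfolding lam_def by (rule continuous_on_compose2[OF df]) (use assms(2) in auto)
  qed
  define XX where "XX p = cs.XL (fst p) (snd p)" for p
  show "\<exists>X. lagrangian_param f u X"
  proof (intro exI[of _ XX])
    have cont: "continuous_on ({0..} \<times> UNIV) XX" unfolding XX_def by (rule cs.XL_cont)
    have surj: "XX ` ({0..} \<times> UNIV) = UNIV"
    proof (intro set_eqI iffI)
      fix x :: real
      have c0: "continuous_on UNIV (\<lambda>s. XX (0, s))"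
        by (rule continuous_on_compose2[OF cont]) (auto intro!: continuous_intros)
      have "XX (0, x - 2) \<le> x" "x \<le> XX (0, x + 2)"
        using cs.XL0[of "x-2"] cs.XL0[of "x+2"] unfolding XX_def by (auto simp: abs_le_iff)
      then obtain s where "XX (0, s) = x"
        using IVT'[of "\<lambda>s. XX (0, s)" "x-2" x "x+2"] continuous_on_subset[OF c0] by force
      then show "x \<in> XX ` ({0..} \<times> UNIV)" by force
    qed auto
    have cc: "char_curve f u {0..} (\<lambda>t. XX (t, y))" for y
      unfolding char_curve_def
    proof (intro conjI)
      show "is_interval {0::real..}" by (rule is_interval_ci)
      show "{0::real..} \<subseteq> {0..}" by simp
      show "loc_abs_cont_on {0..} (\<lambda>t. XX (t, y))"
        by (rule lip_abs_cont[of M]) (use cs.M1 cs.XL_lip in \<open>auto simp: XX_def\<close>)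
      show "AE t in lborel. t \<in> {0..} \<longrightarrow> ((\<lambda>t. XX (t, y)) has_real_derivative char_speed f u t (XX (t, y))) (at t)"
        using AE_lborel_singleton[of 0]
      proof (rule eventually_mono)
        fix t :: real assume "t \<noteq> 0"
        show "t \<in> {0..} \<longrightarrow> ((\<lambda>t. XX (t, y)) has_real_derivative char_speed f u t (XX (t, y))) (at t)"
        proof
          assume "t \<in> {0..}"
          then have "0 < t" using \<open>t \<noteq> 0\<close> by simp
          from cs.XL_deriv[OF this, of y] show "((\<lambda>t. XX (t, y)) has_real_derivative char_speed f u t (XX (t, y))) (at t)"
            by (simp add: XX_def char_speed_def lam_def)
        qed
      qed
    qed
    have mono: "mono (\<lambda>y. XX (t, y))" if "0 \<le> t" for t
      by (rule monoI) (simp add: XX_def cs.XL_mono[OF that])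
    show "lagrangian_param f u XX"
      unfolding lagrangian_param_def using cont surj cc mono by blast
  qed
next
  show "\<forall>g. g \<in> borel_measurable borel \<and> bounded (range g) \<and> broad_solution f u g \<longrightarrow>
            (\<forall>X. lagrangian_param f u X \<longrightarrow> lagrangian_solution f u X g)"
  proof (intro allI impI)
    fix g X assume g: "g \<in> borel_measurable borel \<and> bounded (range g) \<and> broad_solution f u g"
      and X: "lagrangian_param f u X"
    have int: "interior {0::real..} = {0<..}" by (rule interior_Ici[of "-1"]) simp
    show "lagrangian_solution f u X g"
      unfolding lagrangian_solution_def
    proof (intro conjI allI)
      show "continuous_on ({0..} \<times> UNIV) u" by (rule assms(2))
      show "lagrangian_param f u X" by (rule X)
      fix y
      have "char_curve f u {0..} (\<lambda>t. X (t, y))" using X unfolding lagrangian_param_def by blast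
      then show "distr_deriv_eq {0<..} (\<lambda>t. u (t, X (t, y))) (\<lambda>t. g (t, X (t, y)))"
        using g unfolding broad_solution_def int[symmetric] by blast
    qed
  qed
qed

end
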